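(* Let $\lambda=2\cos(\pi/5)$ and let $H_5$ be the subgroup of $SL(2,\mathbb R)$ generated by $S=\begin{pmatrix}0&1\\-1&0\end{pmatrix}$ and $T=\begin{pmatrix}1&\lambda\\0&1\end{pmatrix}$. Let $H_5^5$ be the subgroup of $H_5$ generated by all fifth powers $x^5$, $x\in H_5$, and let $H_5'=[H_5,H_5]$ be the commutator subgroup. Then neither $H_5^5$ nor $H_5'$ is a congruence subgroup.
   Context: For an ideal $A$ of $\mathbb Z[\lambda]$, $H(A)=\{(a_{ij})\in H_5 : a_{11}-1,\ a_{22}-1,\ a_{12},\ a_{21}\in A\}$. A subgroup of $H_5$ is called congruence if it contains $H(A)$ for some nonzero ideal $A$ of $\mathbb Z[\lambda]$. *)

theory Defs
  imports "HOL-Analysis.Analysis"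
begin

text \<open>Real 2x2 matrices are rendered as real^2^2 (HOL-Analysis), entries a_ij = A $ i $ j.\<close>

definition lam :: real where "lam = 2 * cos (pi / 5)"

definition Smat :: "real^2^2" where
  "Smat = (\<chi> i j. if i = 1 \<and> j = 2 then 1 else if i = 2 \<and> j = 1 then -1 else 0)"

definition Tmat :: "real^2^2" where
  "Tmat = (\<chi> i j. if i = j then 1 else if i = 1 \<and> j = 2 then lam else 0)"

inductive_set gen_subgroup :: "(real^2^2) set \<Rightarrow> (real^2^2) set" for X where
  gen_one: "mat 1 \<in> gen_subgroup X"
| gen_base: "x \<in> X \<Longrightarrow> x \<in> gen_subgroup X"
| gen_mult: "a \<in> gen_subgroup X \<Longrightarrow> b \<in> gen_subgroup X \<Longrightarrow> a ** b \<in> gen_subgroup X"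
| gen_inv: "a \<in> gen_subgroup X \<Longrightarrow> matrix_inv a \<in> gen_subgroup X"

definition H5 :: "(real^2^2) set" where "H5 = gen_subgroup {Smat, Tmat}"

definition H5_fifth :: "(real^2^2) set" where
  "H5_fifth = gen_subgroup {x ** x ** x ** x ** x | x. x \<in> H5}"

definition H5_comm :: "(real^2^2) set" where
  "H5_comm = gen_subgroup {a ** b ** matrix_inv a ** matrix_inv b | a b. a \<in> H5 \<and> b \<in> H5}"

definition Zlam :: "real set" where
  "Zlam = {of_int a + of_int b * lam | a b. True}"

definition is_ideal_Zlam :: "real set \<Rightarrow> bool" where
  "is_ideal_Zlam A \<longleftrightarrow> A \<subseteq> Zlam \<and> 0 \<in> A \<and> (\<forall>x\<in>A. \<forall>y\<in>A. x + y \<in> A)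
      \<and> (\<forall>r\<in>Zlam. \<forall>x\<in>A. r * x \<in> A)"

definition Hcong :: "real set \<Rightarrow> (real^2^2) set" where
  "Hcong A = {M \<in> H5. M$1$1 - 1 \<in> A \<and> M$2$2 - 1 \<in> A \<and> M$1$2 \<in> A \<and> M$2$1 \<in> A}"

definition congruence_subgroup :: "(real^2^2) set \<Rightarrow> bool" where
  "congruence_subgroup G \<longleftrightarrow> (\<exists>A. is_ideal_Zlam A \<and> A \<noteq> {0} \<and> Hcong A \<subseteq> G)"

end

theory Submission
  imports Defs
begin


lemma lam_sq: "lam * lam = lam + 1"
proof -
  define c where "c = cos (pi/5)"
  have 1: "cos (3 * (pi/5)) = 4 * c^3 - 3 * c" unfolding c_def by (rule cos_treble_cos)
  have "cos (3 * (pi/5)) = cos (pi - 2 * (pi/5))" by (rule arg_cong[where f=cos]) simp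
  also have "\<dots> = - cos (2 * (pi/5))" by (rule cos_pi_minus)
  also have "cos (2 * (pi/5)) = 2 * c^2 - 1" unfolding c_def by (rule cos_double_cos)
  finally have e: "4 * c^3 - 3 * c = -(2*c^2 - 1)" using 1 by simp
  have cpos: "c > 0" unfolding c_def by (rule cos_gt_zero) (use pi_gt_zero in auto)
  have "(c + 1) * (4*c^2 - 2*c - 1) = 0" using e by (simp add: algebra_simps power2_eq_square power3_eq_cube)
  hence "4*c^2 - 2*c - 1 = 0" using cpos by simp
  thus ?thesis unfolding lam_def c_def[symmetric] by (simp add: algebra_simps power2_eq_square)
qed

lemma lam_pos: "lam > 0"
  unfolding lam_def by (simp add: cos_gt_zero)

lemma lam_sq2: "lam^2 = lam + 1" using lam_sq by (simp add: power2_eq_square)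

definition M2 :: "real \<Rightarrow> real \<Rightarrow> real \<Rightarrow> real \<Rightarrow> real^2^2" where
  "M2 a b c d = (\<chi> i j. if i = 1 then (if j = 1 then a else b) else (if j = 1 then c else d))"

lemma M2_nth [simp]: "M2 a b c d $ 1 $ 1 = a" "M2 a b c d $ 1 $ 2 = b"
  "M2 a b c d $ 2 $ 1 = c" "M2 a b c d $ 2 $ 2 = d"
  by (simp_all add: M2_def)

lemma M2_eq_iff: "M2 a b c d = M2 a' b' c' d' \<longleftrightarrow> a = a' \<and> b = b' \<and> c = c' \<and> d = d'"
  by (metis M2_nth)

lemma mat_eq_iff2: "(M::real^2^2) = N \<longleftrightarrow> M$1$1 = N$1$1 \<and> M$1$2 = N$1$2 \<and> M$2$1 = N$2$1 \<and> M$2$2 = N$2$2"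
  by (auto simp: vec_eq_iff forall_2)

lemma M2_eta: "(M::real^2^2) = M2 (M$1$1) (M$1$2) (M$2$1) (M$2$2)"
  by (simp add: mat_eq_iff2)

lemma M2_mult [simp]: "M2 a b c d ** M2 e f g h = M2 (a*e+b*g) (a*f+b*h) (c*e+d*g) (c*f+d*h)"
  by (simp add: mat_eq_iff2 matrix_matrix_mult_def sum_2)

lemma mat1_M2: "(mat 1 :: real^2^2) = M2 1 0 0 1"
  by (simp add: mat_eq_iff2 mat_def)

lemma neg_M2: "- M2 a b c d = M2 (-a) (-b) (-c) (-d)"
  by (simp add: mat_eq_iff2)

lemma negmat1_M2: "- (mat 1 :: real^2^2) = M2 (-1) 0 0 (-1)"
  by (simp add: mat1_M2 neg_M2)

lemma Smat_M2: "Smat = M2 0 1 (-1) 0"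
  by (simp add: mat_eq_iff2 Smat_def)

lemma Tmat_M2: "Tmat = M2 1 lam 0 1"
  by (simp add: mat_eq_iff2 Tmat_def)



lemma mult_nth: "((M::real^2^2) ** N)$i$j = M$i$1 * N$1$j + M$i$2 * N$2$j"
  by (simp add: matrix_matrix_mult_def sum_2)

definition Umat :: "real^2^2" where "Umat = M2 0 1 (-1) (-lam)"

lemma ST_U: "Smat ** Tmat = Umat"
  by (simp add: Smat_M2 Tmat_M2 Umat_def)

fun upow :: "nat \<Rightarrow> real^2^2" where
  "upow 0 = mat 1"
| "upow (Suc k) = upow k ** Umat"

lemma upow_add: "upow (a + b) = upow a ** upow b"
  by (induction b) (simp_all add: matrix_mul_assoc)

lemma upow1: "upow 1 = Umat" by simp
lemma upow2: "upow 2 = M2 (-1) (-lam) lam lam"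
  by (simp add: numeral_2_eq_2 Umat_def mat1_M2 lam_sq)
lemma upow3: "upow 3 = M2 lam lam (-lam) (-1)"
  by (simp add: numeral_3_eq_3 Umat_def mat1_M2 lam_sq algebra_simps)
lemma upow4: "upow 4 = M2 (-lam) (-1) 1 0"
proof -
  have "upow 4 = upow 3 ** Umat" by (simp add: numeral_eq_Suc)
  thus ?thesis by (simp add: upow3 Umat_def lam_sq algebra_simps)
qed
lemma upow5: "upow 5 = mat 1"
proof -
  have "upow 5 = upow 4 ** Umat" by (simp add: numeral_eq_Suc)
  thus ?thesis by (simp add: upow4 Umat_def lam_sq algebra_simps mat1_M2)
qed

lemma upow_mult5: "upow (5 * j) = mat 1"
  by (induction j) (simp_all add: upow_add upow5)

lemma upow_mod: "upow k = upow (k mod 5)"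
proof -
  have "upow k = upow (5 * (k div 5) + k mod 5)" by simp
  also have "\<dots> = upow (k mod 5)" by (simp only: upow_add upow_mult5 matrix_mul_lid)
  finally show ?thesis .
qed

definition app :: "real^2^2 \<Rightarrow> real \<times> real \<Rightarrow> real \<times> real" where
  "app M p = (M$1$1 * fst p + M$1$2 * snd p, M$2$1 * fst p + M$2$2 * snd p)"

lemma app_mult: "app (M ** N) p = app M (app N p)"
  by (simp add: app_def mult_nth algebra_simps)

definition pos :: "real \<times> real \<Rightarrow> bool" where "pos p \<longleftrightarrow> fst p * snd p > 0"
definition neg :: "real \<times> real \<Rightarrow> bool" where "neg p \<longleftrightarrow> fst p * snd p < 0"

lemma S_neg_pos: "neg p \<Longrightarrow> pos (app Smat p)"
  by (simp add: app_def Smat_M2 pos_def neg_def mult.commute)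

lemma upow_pos_neg:
  assumes "k mod 5 \<noteq> 0" "pos p" shows "neg (app (upow k) p)"
proof -
  obtain x y where p: "p = (x,y)" by (cases p)
  have xy: "x*y > 0" using assms(2) p by (simp add: pos_def)
  have l: "lam > 0" by (rule lam_pos)
  have "k mod 5 = 1 \<or> k mod 5 = 2 \<or> k mod 5 = 3 \<or> k mod 5 = 4" using assms(1) by auto
  moreover have "neg (app (upow 1) p)"
  proof -
    have "y*(-x - lam*y) = -(x*y) - lam*(y*y)" by (simp add: algebra_simps)
    moreover have "lam*(y*y) \<ge> 0" using l by simp
    ultimately show ?thesis using xy by (simp add: app_def p neg_def Umat_def)
  qed
  moreover have "neg (app (upow 2) p)"
  proof -
    have "(x + lam*y)*(x+y) = x*x + (1+lam)*(x*y) + lam*(y*y)" by (simp add: algebra_simps)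
    moreover have "(1+lam)*(x*y) > 0" using l xy by simp
    moreover have "lam*(y*y) \<ge> 0" using l by simp
    moreover have "x*x \<ge> 0" by simp
    ultimately have "(x + lam*y)*(x+y) > 0" by linarith
    hence "lam*((x + lam*y)*(x+y)) > 0" using l by simp
    moreover have "(-x - lam*y)*(lam*x+lam*y) = -(lam*((x + lam*y)*(x+y)))" by (simp add: algebra_simps)
    ultimately show ?thesis by (simp add: upow2 app_def p neg_def)
  qed
  moreover have "neg (app (upow 3) p)"
  proof -
    have "(lam*x + y)*(x+y) = lam*(x*x) + (1+lam)*(x*y) + (y*y)" by (simp add: algebra_simps)
    moreover have "(1+lam)*(x*y) > 0" using l xy by simp
    moreover have "lam*(x*x) \<ge> 0" using l by simp
    moreover have "y*y \<ge> 0" by simp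
    ultimately have "(lam*x + y)*(x+y) > 0" by linarith
    hence "lam*((lam*x + y)*(x+y)) > 0" using l by simp
    moreover have "(lam*x+lam*y)*(-lam*x - y) = -(lam*((lam*x + y)*(x+y)))" by (simp add: algebra_simps)
    ultimately show ?thesis by (simp add: upow3 app_def p neg_def)
  qed
  moreover have "neg (app (upow 4) p)"
  proof -
    have "(-lam*x - y)*x = -(lam*(x*x)) - x*y" by (simp add: algebra_simps)
    moreover have "lam*(x*x) \<ge> 0" using l by simp
    ultimately show ?thesis using xy by (simp add: upow4 app_def p neg_def)
  qed
  ultimately show ?thesis by (metis upow_mod)
qed



fun wd :: "nat list \<Rightarrow> real^2^2" where
  "wd [] = mat 1"
| "wd [k] = upow k"
| "wd (k # l # ks) = upow k ** Smat ** wd (l # ks)"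

lemma wd_cons: "ks \<noteq> [] \<Longrightarrow> wd (k # ks) = upow k ** Smat ** wd ks"
  by (cases ks) auto

lemma wd_upow_cons: "upow a ** wd (b # ys) = wd ((a+b) # ys)"
  by (cases ys) (simp_all add: upow_add matrix_mul_assoc)

lemma wd_snoc_cons: "wd (xs @ [a]) ** wd (b # ys) = wd (xs @ (a+b) # ys)"
proof (induction xs)
  case Nil
  then show ?case by (simp add: wd_upow_cons)
next
  case (Cons x xs)
  have "wd ((x # xs) @ [a]) ** wd (b # ys) = upow x ** Smat ** (wd (xs @ [a]) ** wd (b # ys))"
    by (simp add: wd_cons matrix_mul_assoc)
  also have "\<dots> = wd ((x # xs) @ (a+b) # ys)" using Cons by (simp add: wd_cons)
  finally show ?case .
qed

lemma wd_append: "xs \<noteq> [] \<Longrightarrow> ys \<noteq> [] \<Longrightarrow> wd (xs @ ys) = wd xs ** Smat ** wd ys"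
proof (induction xs rule: wd.induct)
  case 1 then show ?case by simp
next
  case (2 k) then show ?case by (simp add: wd_cons)
next
  case (3 k l ks)
  then show ?case by (simp add: wd_cons matrix_mul_assoc)
qed

lemma wd_mult:
  assumes "xs \<noteq> []" "ys \<noteq> []"
  shows "\<exists>zs. zs \<noteq> [] \<and> wd xs ** wd ys = wd zs \<and> sum_list zs = sum_list xs + sum_list ys
     \<and> length zs < length xs + length ys"
proof -
  obtain xs' a where xa: "xs = xs' @ [a]" using assms(1) by (metis rev_exhaust)
  obtain b ys' where yb: "ys = b # ys'" using assms(2) by (metis list.exhaust)
  show ?thesis
    by (rule exI[of _ "xs' @ (a+b) # ys'"]) (simp add: xa yb wd_snoc_cons)
qed

definition allnz :: "nat list \<Rightarrow> bool" where "allnz ks \<longleftrightarrow> (\<forall>k\<in>set ks. k mod 5 \<noteq> 0)"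

lemma pingpong: "ks \<noteq> [] \<Longrightarrow> allnz ks \<Longrightarrow> pos p \<Longrightarrow> neg (app (wd ks) p)"
proof (induction ks arbitrary: p rule: wd.induct)
  case 1 then show ?case by simp
next
  case (2 k) then show ?case by (simp add: allnz_def upow_pos_neg)
next
  case (3 k l ks)
  have "neg (app (wd (l # ks)) p)" using 3 by (simp add: allnz_def)
  hence "pos (app Smat (app (wd (l # ks)) p))" by (rule S_neg_pos)
  hence "neg (app (upow k) (app Smat (app (wd (l # ks)) p)))"
    using 3(3) by (intro upow_pos_neg) (simp_all add: allnz_def)
  thus ?case by (simp add: app_mult)
qed

lemma not_pm:
  assumes "ks \<noteq> []" "allnz ks" shows "wd ks \<noteq> mat 1 \<and> wd ks \<noteq> - mat 1"
proof -
  have "neg (app (wd ks) (1,1))" by (rule pingpong[OF assms]) (simp add: pos_def)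
  thus ?thesis by (auto simp: app_def neg_def mat1_M2 negmat1_M2)
qed

lemma mneg1: "(A::real^2^2) ** (- B::real^2^2) = - (A ** B)"
  unfolding mat_eq_iff2 by (simp add: mult_nth)
lemma mneg2: "(- A::real^2^2) ** (B::real^2^2) = - (A ** B)"
  unfolding mat_eq_iff2 by (simp add: mult_nth)
lemmas mneg = mneg1 mneg2

lemma Smat_sq: "Smat ** Smat = - mat 1"
  by (simp add: Smat_M2 negmat1_M2)

lemma main_lemma:
  "ks \<noteq> [] \<Longrightarrow> wd ks = mat 1 \<or> wd ks = - mat 1 \<Longrightarrow> 5 dvd sum_list ks"
proof (induction "length ks" arbitrary: ks rule: less_induct)
  case less
  obtain k0 rest where ks: "ks = k0 # rest" using less(2) by (metis list.exhaust)
  show ?case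
  proof (cases "rest = []")
    case True
    have "\<not> allnz ks" using not_pm[OF less(2)] less(3) by blast
    thus ?thesis using True ks by (simp add: allnz_def dvd_eq_mod_eq_0)
  next
    case False
    obtain mid kl where rest: "rest = mid @ [kl]" using False by (metis rev_exhaust)
    show ?thesis
    proof (cases "\<exists>z\<in>set mid. z mod 5 = 0")
      case True
      then obtain m1 z m2 where mid: "mid = m1 @ z # m2" and z: "z mod 5 = 0"
        by (metis split_list)
      have ks2: "ks = (k0 # m1) @ [z] @ (m2 @ [kl])" by (simp add: ks rest mid)
      have "wd ks = wd (k0 # m1) ** Smat ** (wd [z] ** Smat ** wd (m2 @ [kl]))"
        unfolding ks2 by (simp add: wd_append del: append.simps append_Cons)
      also have "wd [z] = mat 1" using z by (simp add: upow_mod[of z])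
      finally have "wd ks = wd (k0 # m1) ** (Smat ** Smat) ** wd (m2 @ [kl])"
        by (simp add: matrix_mul_assoc)
      hence e: "wd ks = - (wd (k0 # m1) ** wd (m2 @ [kl]))"
        by (simp add: Smat_sq mneg)
      obtain zs where zs: "zs \<noteq> []" "wd (k0 # m1) ** wd (m2 @ [kl]) = wd zs"
        "sum_list zs = sum_list (k0 # m1) + sum_list (m2 @ [kl])"
        "length zs < length (k0 # m1) + length (m2 @ [kl])"
        using wd_mult[of "k0 # m1" "m2 @ [kl]"] by auto
      have "wd zs = - wd ks" using e zs(2) by simp
      hence "wd zs = mat 1 \<or> wd zs = - mat 1" using less(3) by auto
      moreover have "length zs < length ks" using zs(4) ks2 by simp
      ultimately have "5 dvd sum_list zs" using less(1) zs(1) by blast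
      moreover have "sum_list ks = sum_list zs + z" using zs(3) ks2 by simp
      ultimately show ?thesis using z by (simp add: dvd_eq_mod_eq_0 mod_add_eq[symmetric])
    next
      case False
      have "\<exists>c<3. (c + k0) mod 5 \<noteq> 0 \<and> (kl + (5 - c)) mod 5 \<noteq> 0" by presburger
      then obtain c where c: "c < 3" "(c + k0) mod 5 \<noteq> 0" "(kl + (5 - c)) mod 5 \<noteq> 0" by blast
      define ls where "ls = ((c + k0) # mid) @ [kl + (5 - c)]"
      have "upow c ** wd ks ** upow (5 - c) = wd ((c + k0) # rest) ** wd [5 - c]"
        by (simp add: ks wd_upow_cons)
      also have "\<dots> = wd ls" unfolding ls_def rest
        using wd_snoc_cons[of "(c + k0) # mid" kl "5 - c" "[]"] by simp
      finally have e: "upow c ** wd ks ** upow (5 - c) = wd ls" .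
      have u: "upow c ** upow (5 - c) = mat 1" using c(1) by (simp add: upow_add[symmetric] upow5)
      have "wd ls = mat 1 \<or> wd ls = - mat 1"
        using less(3) e[symmetric] u by (auto simp: mneg matrix_mul_assoc)
      moreover have "allnz ls" using False c by (auto simp: allnz_def ls_def)
      moreover have "ls \<noteq> []" by (simp add: ls_def)
      ultimately show ?thesis using not_pm by blast
    qed
  qed
qed



definition Wd :: "(real^2^2) set" where "Wd = {wd ks | ks. ks \<noteq> []}"

definition invp :: "real^2^2 \<Rightarrow> real^2^2 \<Rightarrow> bool" where
  "invp A B \<longleftrightarrow> A ** B = mat 1 \<and> B ** A = mat 1"

lemma invp_comp: "invp A A' \<Longrightarrow> invp B B' \<Longrightarrow> invp (A ** B) (B' ** A')"
proof -
  assume a: "invp A A'" and b: "invp B B'"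
  have "A ** B ** (B' ** A') = A ** (B ** B') ** A'" by (simp add: matrix_mul_assoc)
  moreover have "B' ** A' ** (A ** B) = B' ** (A' ** A) ** B" by (simp add: matrix_mul_assoc)
  ultimately show ?thesis using a b by (simp add: invp_def)
qed

lemma matrix_inv_eq: "invp A B \<Longrightarrow> matrix_inv A = B"
proof -
  assume h: "invp A B"
  hence "\<exists>A'. A ** A' = mat 1 \<and> A' ** A = mat 1" by (auto simp: invp_def)
  hence s: "A ** matrix_inv A = mat 1 \<and> matrix_inv A ** A = mat 1"
    unfolding matrix_inv_def by (rule someI_ex)
  have "matrix_inv A = matrix_inv A ** (A ** B)" using h by (simp add: invp_def)
  also have "\<dots> = (matrix_inv A ** A) ** B" by (simp add: matrix_mul_assoc)
  also have "\<dots> = B" using s by simp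
  finally show ?thesis .
qed

lemma wd_S: "wd [0,0] = Smat" by simp

lemma wd_S3: "invp Smat (wd [0,0,0,0])"
  by (simp add: invp_def Smat_M2 mat1_M2)

lemma Wd_mult: "A \<in> Wd \<Longrightarrow> B \<in> Wd \<Longrightarrow> A ** B \<in> Wd"
  unfolding Wd_def using wd_mult by blast

lemma wd_in_Wd [simp]: "ks \<noteq> [] \<Longrightarrow> wd ks \<in> Wd" by (auto simp: Wd_def)

lemma upow_inv: "\<exists>B\<in>Wd. invp (upow k) B"
proof -
  have "k + (5 - k mod 5) = 5 * (k div 5 + 1)" by presburger
  hence 1: "upow k ** upow (5 - k mod 5) = mat 1"
    by (metis upow_add upow_mult5)
  hence "upow (5 - k mod 5) ** upow k = mat 1"
    by (metis upow_add add.commute)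
  with 1 have "invp (upow k) (wd [5 - k mod 5])" by (simp add: invp_def)
  thus ?thesis using wd_in_Wd[of "[5 - k mod 5]"] by blast
qed

lemma wd_inv: "ks \<noteq> [] \<Longrightarrow> \<exists>B\<in>Wd. invp (wd ks) B"
proof (induction ks)
  case Nil then show ?case by simp
next
  case (Cons k ks)
  show ?case
  proof (cases "ks = []")
    case True then show ?thesis using upow_inv by simp
  next
    case False
    obtain B1 where B1: "B1 \<in> Wd" "invp (wd ks) B1" using Cons False by auto
    obtain B2 where B2: "B2 \<in> Wd" "invp (upow k) B2" using upow_inv by blast
    have "invp (upow k ** (Smat ** wd ks)) ((B1 ** wd [0,0,0,0]) ** B2)"
      by (intro invp_comp B1 B2 wd_S3)
    moreover have "(B1 ** wd [0,0,0,0]) ** B2 \<in> Wd" by (intro Wd_mult B1(1) B2(1) wd_in_Wd) simp_all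
    moreover have "wd (k # ks) = upow k ** (Smat ** wd ks)" using False by (simp add: wd_cons matrix_mul_assoc)
    ultimately show ?thesis by auto
  qed
qed

lemma Wd_inv: "A \<in> Wd \<Longrightarrow> matrix_inv A \<in> Wd \<and> invp A (matrix_inv A)"
  using wd_inv matrix_inv_eq unfolding Wd_def by fastforce

lemma wd_welldef:
  assumes "ks \<noteq> []" "js \<noteq> []" "wd ks = wd js"
  shows "sum_list ks mod 5 = sum_list js mod 5"
proof -
  obtain B where B: "B \<in> Wd" "invp (wd js) B" using wd_inv assms(2) by blast
  obtain ls where ls: "ls \<noteq> []" "B = wd ls" using B(1) by (auto simp: Wd_def)
  obtain z1 where z1: "z1 \<noteq> []" "wd ks ** wd ls = wd z1" "sum_list z1 = sum_list ks + sum_list ls"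
    using wd_mult[OF assms(1) ls(1)] by blast
  obtain z2 where z2: "z2 \<noteq> []" "wd js ** wd ls = wd z2" "sum_list z2 = sum_list js + sum_list ls"
    using wd_mult[OF assms(2) ls(1)] by blast
  have "wd z1 = mat 1" "wd z2 = mat 1" using B(2) ls(2) z1(2) z2(2) assms(3) by (auto simp: invp_def)
  hence "5 dvd sum_list z1" "5 dvd sum_list z2" using main_lemma z1(1) z2(1) by blast+
  thus ?thesis using z1(3) z2(3) by presburger
qed

definition sig :: "real^2^2 \<Rightarrow> nat" where
  "sig M = (SOME s. \<exists>ks. ks \<noteq> [] \<and> M = wd ks \<and> s = sum_list ks mod 5)"

lemma sig_wd: "ks \<noteq> [] \<Longrightarrow> sig (wd ks) = sum_list ks mod 5"
proof -
  assume k: "ks \<noteq> []"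
  have "\<exists>s. \<exists>js. js \<noteq> [] \<and> wd ks = wd js \<and> s = sum_list js mod 5" using k by blast
  hence "\<exists>js. js \<noteq> [] \<and> wd ks = wd js \<and> sig (wd ks) = sum_list js mod 5"
    unfolding sig_def by (rule someI_ex)
  then obtain js where "js \<noteq> []" "wd ks = wd js" "sig (wd ks) = sum_list js mod 5" by blast
  thus ?thesis using wd_welldef[OF k] by simp
qed

lemma sig_mult: "A \<in> Wd \<Longrightarrow> B \<in> Wd \<Longrightarrow> sig (A ** B) = (sig A + sig B) mod 5"
proof -
  assume "A \<in> Wd" "B \<in> Wd"
  then obtain a b where ab: "a \<noteq> []" "b \<noteq> []" "A = wd a" "B = wd b" by (auto simp: Wd_def)
  obtain z where z: "z \<noteq> []" "wd a ** wd b = wd z" "sum_list z = sum_list a + sum_list b"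
    using wd_mult[OF ab(1,2)] by blast
  show ?thesis using z ab by (simp add: sig_wd mod_add_eq)
qed

lemma sig_lt5: "A \<in> Wd \<Longrightarrow> sig A < 5" by (auto simp: Wd_def sig_wd)

lemma sig_one: "sig (mat 1) = 0" using sig_wd[of "[0]"] by simp
lemma one_Wd: "mat 1 \<in> Wd" using wd_in_Wd[of "[0]"] by simp

lemma sig_inv: "A \<in> Wd \<Longrightarrow> (sig A + sig (matrix_inv A)) mod 5 = 0"
proof -
  assume A: "A \<in> Wd"
  have "sig (A ** matrix_inv A) = sig (mat 1)" using Wd_inv[OF A] by (simp add: invp_def)
  thus ?thesis using sig_mult[OF A] Wd_inv[OF A] by (simp add: sig_one)
qed

definition K5 :: "(real^2^2) set" where "K5 = {A \<in> Wd. sig A = 0}"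

lemma gen_sub_K5: "X \<subseteq> K5 \<Longrightarrow> gen_subgroup X \<subseteq> K5"
proof
  fix M assume X: "X \<subseteq> K5" and M: "M \<in> gen_subgroup X"
  show "M \<in> K5" using M
  proof (induction rule: gen_subgroup.induct)
    case gen_one
    thus ?case by (simp add: K5_def sig_one one_Wd)
  next
    case (gen_base x) then show ?case using X by auto
  next
    case (gen_mult a b) then show ?case by (auto simp: K5_def Wd_mult sig_mult)
  next
    case (gen_inv a)
    then show ?case using sig_inv[of a] Wd_inv[of a] sig_lt5[of "matrix_inv a"] by (auto simp: K5_def)
  qed
qed

lemma T_wd: "Tmat = wd [0,0,0,1]"
  by (simp add: Tmat_M2 Smat_M2 Umat_def mat1_M2)

lemma Tinv_wd: "matrix_inv Tmat = wd [4,0]"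
proof -
  have "wd [4,0] = M2 1 (-lam) 0 1" by (simp add: upow4 Smat_M2 mat1_M2)
  hence "invp Tmat (wd [4,0])" by (simp add: invp_def Tmat_M2 mat1_M2)
  thus ?thesis by (rule matrix_inv_eq)
qed

lemma H5_Wd: "H5 \<subseteq> Wd"
proof
  fix M assume "M \<in> H5"
  thus "M \<in> Wd" unfolding H5_def
  proof (induction rule: gen_subgroup.induct)
    case gen_one
    thus ?case by (rule one_Wd)
  next
    case (gen_base x)
    then show ?case using T_wd wd_S wd_in_Wd by (metis empty_iff insert_iff list.distinct(1))
  next
    case (gen_mult a b) then show ?case by (simp add: Wd_mult)
  next
    case (gen_inv a) then show ?case by (simp add: Wd_inv)
  qed
qed

lemma fifth_K5: "H5_fifth \<subseteq> K5"
  unfolding H5_fifth_def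
proof (rule gen_sub_K5, safe)
  fix x assume "x \<in> H5"
  hence x: "x \<in> Wd" using H5_Wd by blast
  have "sig (x ** x ** x ** x ** x) = 5 * sig x mod 5"
    using x by (simp add: sig_mult Wd_mult mod_add_eq) presburger
  thus "x ** x ** x ** x ** x \<in> K5" using x by (simp add: K5_def Wd_mult)
qed

lemma comm_K5: "H5_comm \<subseteq> K5"
  unfolding H5_comm_def
proof (rule gen_sub_K5, safe)
  fix a b assume "a \<in> H5" "b \<in> H5"
  hence a: "a \<in> Wd" and b: "b \<in> Wd" using H5_Wd by blast+
  have ia: "matrix_inv a \<in> Wd" and ib: "matrix_inv b \<in> Wd" using Wd_inv a b by blast+
  have "sig (a ** b ** matrix_inv a ** matrix_inv b) = (sig a + sig b + sig (matrix_inv a) + sig (matrix_inv b)) mod 5"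
    using a b ia ib by (simp add: sig_mult Wd_mult) presburger
  also have "\<dots> = 0" using sig_inv[OF a] sig_inv[OF b] by presburger
  finally show "a ** b ** matrix_inv a ** matrix_inv b \<in> K5" using a b ia ib by (simp add: K5_def Wd_mult)
qed



definition Zl :: "real \<Rightarrow> bool" where
  "Zl x \<longleftrightarrow> (\<exists>a b::int. x = of_int a + of_int b * lam)"
definition Jc :: "int \<Rightarrow> real \<Rightarrow> bool" where
  "Jc c x \<longleftrightarrow> (\<exists>a b::int. x = of_int c * (of_int a + of_int b * lam))"

lemma Zl_int [simp]: "Zl (of_int a)" unfolding Zl_def by (rule exI[of _ a], rule exI[of _ 0]) simp
lemma Zl_0 [simp]: "Zl 0" using Zl_int[of 0] by simp
lemma Zl_1 [simp]: "Zl 1" using Zl_int[of 1] by simp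
lemma Zl_lam [simp]: "Zl lam" unfolding Zl_def by (rule exI[of _ 0], rule exI[of _ 1]) simp
lemma Zl_add [simp]: "Zl x \<Longrightarrow> Zl y \<Longrightarrow> Zl (x + y)"
  unfolding Zl_def by (elim exE, rename_tac a b c d, rule_tac x="a+c" in exI, rule_tac x="b+d" in exI) (simp add: algebra_simps)
lemma Zl_minus [simp]: "Zl x \<Longrightarrow> Zl (- x)"
  unfolding Zl_def by (elim exE, rename_tac a b, rule_tac x="-a" in exI, rule_tac x="-b" in exI) (simp add: algebra_simps)
lemma Zl_diff [simp]: "Zl x \<Longrightarrow> Zl y \<Longrightarrow> Zl (x - y)"
  using Zl_add Zl_minus by (metis diff_conv_add_uminus)
lemma Zl_mult [simp]: "Zl x \<Longrightarrow> Zl y \<Longrightarrow> Zl (x * y)"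
proof -
  assume "Zl x" "Zl y"
  then obtain a b c d where xy: "x = of_int a + of_int b * lam" "y = of_int c + of_int d * lam"
    unfolding Zl_def by blast
  have "x * y = of_int a * of_int c + (of_int a * of_int d + of_int b * of_int c) * lam
      + of_int b * of_int d * (lam * lam)" unfolding xy by (simp add: algebra_simps)
  also have "\<dots> = of_int (a*c + b*d) + of_int (a*d + b*c + b*d) * lam"
    by (simp add: lam_sq algebra_simps)
  finally show "Zl (x*y)" unfolding Zl_def by blast
qed

lemma Jc_add [simp]: "Jc c x \<Longrightarrow> Jc c y \<Longrightarrow> Jc c (x + y)"
  unfolding Jc_def by (elim exE, rename_tac a b e d, rule_tac x="a+e" in exI, rule_tac x="b+d" in exI) (simp add: algebra_simps)
lemma Jc_0 [simp]: "Jc c 0" unfolding Jc_def by (rule exI[of _ 0], rule exI[of _ 0]) simp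
lemma Jc_intro: "Zl z \<Longrightarrow> Jc c (of_int c * z)" unfolding Jc_def Zl_def by blast
lemma Jc_mult [simp]: "Zl y \<Longrightarrow> Jc c x \<Longrightarrow> Jc c (y * x)"
proof -
  assume "Zl y" "Jc c x"
  then obtain a b where x: "x = of_int c * (of_int a + of_int b * lam)" unfolding Jc_def by blast
  have "y * x = of_int c * (y * (of_int a + of_int b * lam))" unfolding x by simp
  moreover have "Zl (y * (of_int a + of_int b * lam))" using \<open>Zl y\<close> by simp
  ultimately show ?thesis using Jc_intro by metis
qed
lemma Jc_mult2 [simp]: "Zl y \<Longrightarrow> Jc c x \<Longrightarrow> Jc c (x * y)"
  using Jc_mult by (metis mult.commute)
lemma Jc_minus [simp]: "Jc c x \<Longrightarrow> Jc c (- x)"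
  using Jc_mult[of "-1" c x] by simp
lemma Jc_diff [simp]: "Jc c x \<Longrightarrow> Jc c y \<Longrightarrow> Jc c (x - y)"
  by (metis Jc_add Jc_minus diff_conv_add_uminus)

lemma descent: "(a::int)^2 + a*b - b^2 = 0 \<Longrightarrow> a = 0 \<and> b = 0"
proof (induction "nat (\<bar>a\<bar> + \<bar>b\<bar>)" arbitrary: a b rule: less_induct)
  case less
  show ?case
  proof (cases "a = 0 \<and> b = 0")
    case True then show ?thesis .
  next
    case False
    have "even (a^2 + a*b - b^2)" using less(2) by simp
    hence ev: "even a \<and> even b" by (cases "even a"; cases "even b") (auto simp: power2_eq_square)
    then obtain a' b' where ab: "a = 2*a'" "b = 2*b'" by (auto elim!: evenE)
    have "4 * (a'^2 + a'*b' - b'^2) = 0" using less(2) unfolding ab by (simp add: algebra_simps power2_eq_square)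
    hence "a'^2 + a'*b' - b'^2 = 0" by simp
    moreover have "nat (\<bar>a'\<bar> + \<bar>b'\<bar>) < nat (\<bar>a\<bar> + \<bar>b\<bar>)" using False ab by auto
    ultimately have "a' = 0 \<and> b' = 0" using less(1) by blast
    thus ?thesis using ab by simp
  qed
qed

lemma indep: "of_int a + of_int b * lam = 0 \<Longrightarrow> a = 0 \<and> b = 0"
proof -
  assume h: "of_int a + of_int b * lam = 0"
  have "(of_int b * lam) * (of_int b * lam) = (of_int b * of_int b) * (lam * lam)"
    by (simp add: algebra_simps)
  also have "\<dots> = of_int b * (of_int b * lam) + of_int b * of_int b"
    by (simp add: lam_sq algebra_simps)
  finally have sq: "(of_int b * lam) * (of_int b * lam) = of_int b * (of_int b * lam) + of_int b * of_int b" .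
  have bl: "of_int b * lam = - of_int a" using h by (simp add: eq_neg_iff_add_eq_0)
  have "(- of_int a) * (- of_int a) = of_int b * (- of_int a) + of_int b * (of_int b :: real)"
    using sq unfolding bl .
  hence "real_of_int (a*a) = real_of_int (- (b * a) + b * b)" by simp
  hence "a*a = - (b*a) + b*b" by (simp only: of_int_eq_iff)
  hence "a^2 + a*b - b^2 = 0" by (simp add: power2_eq_square algebra_simps)
  thus ?thesis using descent by blast
qed

lemma Jc_inter:
  assumes cop: "coprime m q" and "Jc m x" "Jc q x" shows "Jc (m*q) x"
proof -
  obtain a b where x1: "x = of_int m * (of_int a + of_int b * lam)" using assms(2) unfolding Jc_def by blast
  obtain c d where x2: "x = of_int q * (of_int c + of_int d * lam)" using assms(3) unfolding Jc_def by blast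
  have "of_int (m*a - q*c) + of_int (m*b - q*d) * lam = 0" using x1 x2 by (simp add: algebra_simps)
  hence e: "m*a = q*c" "m*b = q*d" using indep by fastforce+
  have "q dvd m*a" "q dvd m*b" using e by simp_all
  hence "q dvd a" "q dvd b" using cop by (simp_all add: coprime_commute coprime_dvd_mult_right_iff)
  then obtain a' b' where ab: "a = q*a'" "b = q*b'" by (auto elim!: dvdE)
  have "x = of_int (m*q) * (of_int a' + of_int b' * lam)" unfolding x1 ab by (simp add: algebra_simps)
  thus ?thesis unfolding Jc_def by blast
qed

definition ZM :: "real^2^2 \<Rightarrow> bool" where "ZM M \<longleftrightarrow> (\<forall>i j. Zl (M$i$j))"
definition congm :: "int \<Rightarrow> real^2^2 \<Rightarrow> real^2^2 \<Rightarrow> bool" where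
  "congm c M N \<longleftrightarrow> ZM M \<and> ZM N \<and> (\<forall>i j. Jc c (M$i$j - N$i$j))"

lemma ZM_M2 [simp]: "ZM (M2 a b c d) \<longleftrightarrow> Zl a \<and> Zl b \<and> Zl c \<and> Zl d"
  unfolding ZM_def by (auto simp: forall_2)

lemma ZM_mult: "ZM A \<Longrightarrow> ZM B \<Longrightarrow> ZM (A ** B)"
  unfolding ZM_def by (simp add: mult_nth)

lemma congm_M2: "congm c (M2 a b e d) (M2 a' b' e' d') \<longleftrightarrow>
   Zl a \<and> Zl b \<and> Zl e \<and> Zl d \<and> Zl a' \<and> Zl b' \<and> Zl e' \<and> Zl d' \<and>
   Jc c (a - a') \<and> Jc c (b - b') \<and> Jc c (e - e') \<and> Jc c (d - d')"
  unfolding congm_def by (auto simp: forall_2)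

lemma congm_refl: "ZM A \<Longrightarrow> congm c A A" unfolding congm_def by simp

lemma congm_mult: "congm c A A' \<Longrightarrow> congm c B B' \<Longrightarrow> congm c (A ** B) (A' ** B')"
proof -
  assume a: "congm c A A'" and b: "congm c B B'"
  have z: "ZM A" "ZM A'" "ZM B" "ZM B'" using a b by (auto simp: congm_def)
  have "Jc c ((A ** B)$i$j - (A' ** B')$i$j)" for i j
  proof -
    have "(A ** B)$i$j - (A' ** B')$i$j =
        A$i$1 * (B$1$j - B'$1$j) + (A$i$1 - A'$i$1) * B'$1$j
      + A$i$2 * (B$2$j - B'$2$j) + (A$i$2 - A'$i$2) * B'$2$j"
      by (simp add: mult_nth algebra_simps)
    moreover have "Jc c (A$i$1 * (B$1$j - B'$1$j))" "Jc c ((A$i$1 - A'$i$1) * B'$1$j)"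
       "Jc c (A$i$2 * (B$2$j - B'$2$j))" "Jc c ((A$i$2 - A'$i$2) * B'$2$j)"
      using a b z by (auto simp: congm_def ZM_def)
    ultimately show ?thesis by simp
  qed
  thus ?thesis using z by (simp add: congm_def ZM_mult)
qed



definition tpow :: "int \<Rightarrow> real^2^2" where "tpow a = M2 1 (of_int a * lam) 0 1"

lemma tpow0: "tpow 0 = mat 1" by (simp add: tpow_def mat1_M2)
lemma tpow_succ: "tpow (i+1) = tpow i ** Tmat" by (simp add: tpow_def Tmat_M2 algebra_simps)
lemma Tinv_M2: "matrix_inv Tmat = M2 1 (-lam) 0 1"
  unfolding Tinv_wd by (simp add: upow4 Smat_M2 mat1_M2)
lemma tpow_pred: "tpow (i-1) = tpow i ** matrix_inv Tmat" by (simp add: tpow_def Tinv_M2 algebra_simps)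

lemma Smat_H5: "Smat \<in> H5" unfolding H5_def by (rule gen_base) simp
lemma Tmat_H5: "Tmat \<in> H5" unfolding H5_def by (rule gen_base) simp
lemma H5_mult: "a \<in> H5 \<Longrightarrow> b \<in> H5 \<Longrightarrow> a ** b \<in> H5" unfolding H5_def by (rule gen_mult)
lemma Tinv_H5: "matrix_inv Tmat \<in> H5" unfolding H5_def by (rule gen_inv) (simp add: gen_base)
lemma one_H5: "mat 1 \<in> H5" unfolding H5_def by (rule gen_one)

lemma H5_in_Wd: "a \<in> H5 \<Longrightarrow> a \<in> Wd" using H5_Wd by blast

lemma isig_mult: "A \<in> Wd \<Longrightarrow> B \<in> Wd \<Longrightarrow> int (sig (A ** B)) = (int (sig A) + int (sig B)) mod 5"
  by (simp add: sig_mult of_nat_mod)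

lemma sigT: "int (sig Tmat) = 1" unfolding T_wd using sig_wd[of "[0,0,0,1]"] by simp
lemma sigTinv: "int (sig (matrix_inv Tmat)) = 4" unfolding Tinv_wd using sig_wd[of "[4,0]"] by simp
lemma sigS: "int (sig Smat) = 0" unfolding wd_S[symmetric] by (simp add: sig_wd del: wd.simps)

lemma tpow_props: "tpow a \<in> H5 \<and> int (sig (tpow a)) = a mod 5"
proof (induction a rule: int_induct[where k=0])
  case base
  then show ?case by (simp add: tpow0 one_H5 sig_one)
next
  case (step1 i)
  have "tpow (i+1) \<in> H5" using step1 Tmat_H5 by (simp add: tpow_succ H5_mult)
  moreover have "int (sig (tpow (i+1))) = (i + 1) mod 5"
    using step1 unfolding tpow_succ
    by (simp add: isig_mult H5_in_Wd Tmat_H5 sigT mod_add_left_eq)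
  ultimately show ?case by simp
next
  case (step2 i)
  have "tpow (i-1) \<in> H5" using step2 Tinv_H5 by (simp add: tpow_pred H5_mult)
  moreover have "int (sig (tpow (i-1))) = (i - 1) mod 5"
    using step2 unfolding tpow_pred
    by (simp add: isig_mult H5_in_Wd Tinv_H5 sigTinv mod_add_left_eq) presburger
  ultimately show ?case by simp
qed

lemma tpow_H5: "tpow a \<in> H5" using tpow_props by blast
lemma tpow_sig: "int (sig (tpow a)) = a mod 5" using tpow_props by blast

lemma Zl_numeral [simp]: "Zl (numeral n)" using Zl_int[of "numeral n"] by simp

lemma ZM_tpow [simp]: "ZM (tpow a)" by (simp add: tpow_def)
lemma ZM_S [simp]: "ZM Smat" by (simp add: Smat_M2)
lemma ZM_1 [simp]: "ZM (mat 1)" by (simp add: mat1_M2)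

lemma tpow_cong: "c dvd (a - b) \<Longrightarrow> congm c (tpow a) (tpow b)"
proof -
  assume "c dvd (a - b)"
  then obtain t where t: "a - b = c * t" by (auto elim!: dvdE)
  have "of_int a * lam - of_int b * lam = of_int c * (of_int 0 + of_int t * lam)"
    using arg_cong[OF t, of real_of_int] by (simp add: algebra_simps)
  hence "Jc c (of_int a * lam - of_int b * lam)" unfolding Jc_def by blast
  thus ?thesis by (simp add: tpow_def congm_M2)
qed

lemma congm_trans: "congm c A B \<Longrightarrow> congm c B C \<Longrightarrow> congm c A C"
proof -
  assume a: "congm c A B" "congm c B C"
  have "A$i$j - C$i$j = (A$i$j - B$i$j) + (B$i$j - C$i$j)" for i j by simp
  thus ?thesis using a unfolding congm_def by (metis Jc_add)
qed



definition e11 :: "int \<Rightarrow> real" where "e11 r = -(1+2*lam) - of_int r*(4+8*lam)"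
definition e12 :: "real" where "e12 = 4 + 4*lam"
definition e21 :: "int \<Rightarrow> real" where "e21 r = lam + of_int r*(2+3*lam)"
definition e22 :: "real" where "e22 = -(1+2*lam)"

lemma lam_assoc: "lam * (lam * x) = x + lam * x"
proof -
  have "lam * (lam * x) = (lam * lam) * x" by (simp add: mult.assoc)
  thus ?thesis by (simp add: lam_sq algebra_simps)
qed

lemma X0_eq: "tpow (-1) ** Smat ** tpow 1 ** Smat ** tpow 1 ** Smat ** tpow (-1) ** Smat ** tpow r ** Smat
   = M2 (e11 r) e12 (e21 r) e22"
  by (simp add: tpow_def Smat_M2 M2_eq_iff e11_def e12_def e21_def e22_def algebra_simps lam_assoc lam_sq)


lemma X0_sq: "M2 (e11 r) e12 (e21 r) e22 ** M2 (e11 r) e12 (e21 r) e22 =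
  M2 (of_int (2*r+1) * (-2 - 4*lam) * e11 r - 1) (of_int (2*r+1) * (-2 - 4*lam) * e12)
     (of_int (2*r+1) * (-2 - 4*lam) * e21 r) (of_int (2*r+1) * (-2 - 4*lam) * e22 - 1)"
  by (simp add: M2_eq_iff e11_def e12_def e21_def e22_def algebra_simps lam_assoc lam_sq)

lemma X0_sq_cong: "congm (2*r+1) (M2 (e11 r) e12 (e21 r) e22 ** M2 (e11 r) e12 (e21 r) e22) (- mat 1)"
proof -
  have z: "Zl (e11 r)" "Zl e12" "Zl (e21 r)" "Zl e22" by (simp_all add: e11_def e12_def e21_def e22_def)
  have j: "Jc (2*r+1) (of_int (2*r+1) * (-2 - 4*lam) * x)" if "Zl x" for x
  proof -
    have "Jc (2*r+1) (of_int (2*r+1) * ((-2 - 4*lam) * x))" by (rule Jc_intro) (simp add: that)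
    thus ?thesis by (simp only: mult.assoc)
  qed
  show ?thesis unfolding X0_sq negmat1_M2 congm_M2 using z j by simp
qed



lemma decomp5: "(n::int) > 0 \<Longrightarrow> \<exists>k m. n = 5^k * m \<and> \<not> 5 dvd m"
proof (induction "nat n" arbitrary: n rule: less_induct)
  case less
  show ?case
  proof (cases "5 dvd n")
    case True
    then obtain n' where n': "n = 5 * n'" by (auto elim!: dvdE)
    have "n' > 0" "nat n' < nat n" using less(2) n' by auto
    then obtain k m where "n' = 5^k * m" "\<not> 5 dvd m" using less(1) by blast
    hence "n = 5^(Suc k) * m \<and> \<not> 5 dvd m" using n' by simp
    thus ?thesis by blast
  next
    case False
    hence "n = 5^0 * n \<and> \<not> 5 dvd n" by simp
    thus ?thesis by blast
  qed
qed

lemma mat1_nth: "(mat 1 :: real^2^2)$1$1 = 1" "(mat 1 :: real^2^2)$1$2 = 0"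
  "(mat 1 :: real^2^2)$2$1 = 0" "(mat 1 :: real^2^2)$2$2 = 1"
  by (simp_all add: mat1_M2)

lemma key:
  assumes A: "is_ideal_Zlam A" and A0: "A \<noteq> {0}"
  shows "\<exists>M\<in>Hcong A. M \<notin> K5"
proof -
  have Az: "0 \<in> A" "A \<subseteq> Zlam" and Amul: "\<forall>r\<in>Zlam. \<forall>x\<in>A. r*x \<in> A"
    using A unfolding is_ideal_Zlam_def by auto
  obtain x where x: "x \<in> A" "x \<noteq> 0" using A0 Az by blast
  obtain p q where pq: "x = of_int p + of_int q * lam" using x Az unfolding Zlam_def by blast
  define N where "N = p^2 + p*q - q^2"
  have yZ: "of_int (p+q) + of_int (-q) * lam \<in> Zlam" unfolding Zlam_def by blast
  have "(of_int (p+q) + of_int (-q) * lam) * x = of_int N"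
    unfolding pq N_def by (simp add: algebra_simps lam_assoc lam_sq power2_eq_square)
  hence NA: "of_int N \<in> A" using Amul yZ x(1) by metis
  have N0: "N \<noteq> 0"
  proof
    assume N: "N = 0"
    hence "p = 0 \<and> q = 0" using descent[of p q] N_def by simp
    thus False using x pq by simp
  qed
  define n where "n = 5 * \<bar>N\<bar>"
  have npos: "n > 0" using N0 by (simp add: n_def)
  have "of_int (5 * sgn N) \<in> Zlam" unfolding Zlam_def by (rule CollectI, rule exI[of _ "5 * sgn N"], rule exI[of _ 0]) simp
  moreover have "real_of_int n = of_int (5 * sgn N) * of_int N"
    by (simp add: n_def abs_sgn)
  ultimately have nA: "of_int n \<in> A" using Amul NA by metis
  have JA: "e \<in> A" if J: "Jc n e" for e
  proof -
    obtain a b where e: "e = of_int n * (of_int a + of_int b * lam)" using J unfolding Jc_def by blast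
    have "of_int a + of_int b * lam \<in> Zlam" unfolding Zlam_def by blast
    hence "(of_int a + of_int b * lam) * of_int n \<in> A" using Amul nA by blast
    thus ?thesis using e by (simp add: mult.commute)
  qed
  obtain k m where km: "n = 5^k * m" "\<not> 5 dvd m" using decomp5[OF npos] by blast
  have k1: "k \<ge> 1"
  proof (rule ccontr)
    assume "\<not> k \<ge> 1" hence "k = 0" by simp
    hence "n = m" using km by simp
    thus False using km(2) n_def by (metis dvd_triv_left)
  qed
  define Q where "Q = (5::int)^k"
  have nQ: "n = m * Q" using km by (simp add: Q_def)
  have cop: "coprime m Q" unfolding Q_def by (rule prime_imp_power_coprime) (simp_all add: km)
  obtain u v where uv: "u * m + v * Q = 1" using bezout_int[of m Q] cop by (metis coprime_iff_gcd_eq_1)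
  define w where "w = u*m"
  have w1: "w = 1 - v * Q" using uv by (simp add: w_def algebra_simps)
  obtain Q' where Q': "Q = 5 * Q'" using k1 unfolding Q_def by (metis dvd_power dvd_def less_le_trans zero_less_one)
  have oddQ: "odd Q" unfolding Q_def by simp
  define r where "r = (Q - 1) div 2"
  have r2: "2*r + 1 = Q" using oddQ unfolding r_def by presburger
  define t where "t = r * w"
  define X where "X = tpow (-w) ** Smat ** tpow w ** Smat ** tpow w ** Smat ** tpow (-w) ** Smat ** tpow t ** Smat"
  define M where "M = X ** X ** X ** X"
  have XH: "X \<in> H5" by (simp add: X_def tpow_H5 Smat_H5 H5_mult)
  have MH: "M \<in> H5" by (simp add: M_def XH H5_mult)
  have sX: "int (sig X) = t mod 5"
    unfolding X_def by (simp add: isig_mult H5_in_Wd tpow_H5 Smat_H5 H5_mult tpow_sig sigS) presburger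
  have sM: "int (sig M) = (4*t) mod 5"
    unfolding M_def by (simp add: isig_mult H5_in_Wd XH H5_mult sX) presburger
  have nd: "\<not> 5 dvd t"
  proof
    assume h: "5 dvd t"
    have "2*t = (2*r)*w" by (simp add: t_def)
    also have "\<dots> = (Q - 1) * (1 - v * Q)" using r2 w1 by simp
    finally have "2*t + 1 = 5 * (Q' * (1 + v - v * Q))" using Q' by (simp add: algebra_simps)
    hence "5 dvd 2*t + 1" by simp
    moreover have "5 dvd 2*t" using h by simp
    ultimately have "(5::int) dvd 1" by (simp add: dvd_add_right_iff)
    thus False by simp
  qed
  have notK: "M \<notin> K5"
  proof
    assume "M \<in> K5" hence "sig M = 0" by (simp add: K5_def)
    hence "(4*t) mod 5 = 0" using sM by simp
    thus False using nd by presburger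
  qed
  define Y where "Y = tpow 0 ** Smat ** tpow 0 ** Smat ** tpow 0 ** Smat ** tpow 0 ** Smat ** tpow 0 ** Smat"
  have cmX: "congm m X Y" unfolding X_def Y_def
    by (intro congm_mult congm_refl tpow_cong ZM_S) (simp_all add: w_def t_def)
  have "Y ** Y ** Y ** Y = mat 1" by (simp add: Y_def tpow0 Smat_M2 mat1_M2)
  hence cm: "congm m M (mat 1)" using congm_mult[OF congm_mult[OF congm_mult[OF cmX cmX] cmX] cmX]
    unfolding M_def by simp
  define X0 where "X0 = M2 (e11 r) e12 (e21 r) e22"
  have cqX: "congm Q X X0" unfolding X_def X0_def X0_eq[symmetric]
  proof (intro congm_mult congm_refl tpow_cong ZM_S)
    show "Q dvd - w - - 1" using w1 by simp
    show "Q dvd w - 1" using w1 by simp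
    show "Q dvd t - r" proof -
      have "t - r = r * (w - 1)" by (simp add: t_def algebra_simps)
      also have "w - 1 = - (v * Q)" using w1 by simp
      finally have "t - r = Q * (- r * v)" by (simp add: algebra_simps)
      thus ?thesis by simp
    qed
  qed (use w1 in simp_all)
  have c1: "congm Q M (X0 ** X0 ** X0 ** X0)" unfolding M_def
    using congm_mult[OF congm_mult[OF congm_mult[OF cqX cqX] cqX] cqX] .
  have sq: "congm Q (X0 ** X0) (- mat 1)" using X0_sq_cong[of r] r2 by (simp add: X0_def)
  have "congm Q ((X0 ** X0) ** (X0 ** X0)) ((- mat 1) ** (- mat 1))" by (rule congm_mult[OF sq sq])
  hence "congm Q (X0 ** X0 ** X0 ** X0) (mat 1)" by (simp add: matrix_mul_assoc mneg)
  hence cq: "congm Q M (mat 1)" by (rule congm_trans[OF c1])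
  have ent: "M$i$j - (mat 1::real^2^2)$i$j \<in> A" for i j
  proof -
    have "Jc m (M$i$j - (mat 1::real^2^2)$i$j)" "Jc Q (M$i$j - (mat 1::real^2^2)$i$j)"
      using cm cq unfolding congm_def by blast+
    hence "Jc (m*Q) (M$i$j - (mat 1::real^2^2)$i$j)" using Jc_inter cop by blast
    thus ?thesis using JA nQ by simp
  qed
  have "M \<in> Hcong A" unfolding Hcong_def using MH ent[of 1 1] ent[of 2 2] ent[of 1 2] ent[of 2 1]
    by (simp add: mat1_nth)
  thus ?thesis using notK by blast
qed

theorem proposition7p2:
  shows "\<not> congruence_subgroup H5_fifth \<and> \<not> congruence_subgroup H5_comm"
  unfolding congruence_subgroup_def
  using key fifth_K5 comm_K5 by blast


end
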